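(* Let $(G,\alpha,\beta)$ be a minimal counterexample. Then $G$ is connected and has minimum degree at least $3$.
   Context: A counterexample is a triple $(G,\alpha,\beta)$ such that $G$ is a planar graph of girth $5$, $\alpha$ is a proper $4$-colouring of $G$, $\beta$ is a proper $3$-colouring of $G$ (colours $\{1,2,3\}$), and there is no recolouring sequence from $\alpha$ to $\beta$, i.e. no sequence of proper $4$-colourings starting at $\alpha$ and ending at $\beta$ in which consecutive colourings differ on exactly one vertex. A counterexample $(G,\alpha,\beta)$ is minimal if $|V(G)|\leq|V(H)|$ for every counterexample $(H,\alpha',\beta')$. *)

theory Defs
  imports "HOL-Analysis.Analysis"
begin

definition graph :: "'a set \<Rightarrow> 'a set set \<Rightarrow> bool" where
  "graph V E \<longleftrightarrow> finite V \<and> (\<forall>e\<in>E. \<exists>u v. e = {u, v} \<and> u \<noteq> v \<and> u \<in> V \<and> v \<in> V)"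

definition adj :: "'a set set \<Rightarrow> 'a \<Rightarrow> 'a \<Rightarrow> bool" where
  "adj E u v \<longleftrightarrow> {u, v} \<in> E"

definition degree :: "'a set set \<Rightarrow> 'a \<Rightarrow> nat" where
  "degree E v = card {u. {u, v} \<in> E}"

definition connected_graph :: "'a set \<Rightarrow> 'a set set \<Rightarrow> bool" where
  "connected_graph V E \<longleftrightarrow> (\<forall>u\<in>V. \<forall>v\<in>V. (adj E)\<^sup>*\<^sup>* u v)"

definition planar :: "'a set \<Rightarrow> 'a set set \<Rightarrow> bool" where
  "planar V E \<longleftrightarrow>
     (\<exists>(pos :: 'a \<Rightarrow> complex) (\<gamma> :: 'a set \<Rightarrow> real \<Rightarrow> complex).
        inj_on pos V \<and>
        (\<forall>e\<in>E. arc (\<gamma> e) \<and> {pathstart (\<gamma> e), pathfinish (\<gamma> e)} = pos ` e \<and>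
                 path_image (\<gamma> e) \<inter> pos ` V = pos ` e) \<and>
        (\<forall>e\<in>E. \<forall>e'\<in>E. e \<noteq> e' \<longrightarrow> path_image (\<gamma> e) \<inter> path_image (\<gamma> e') \<subseteq> pos ` (e \<inter> e')))"

definition is_cycle :: "'a set \<Rightarrow> 'a set set \<Rightarrow> 'a list \<Rightarrow> bool" where
  "is_cycle V E vs \<longleftrightarrow> length vs \<ge> 3 \<and> distinct vs \<and> set vs \<subseteq> V \<and>
     (\<forall>i < length vs. adj E (vs ! i) (vs ! ((i + 1) mod length vs)))"

definition girth_ge5 :: "'a set \<Rightarrow> 'a set set \<Rightarrow> bool" where
  "girth_ge5 V E \<longleftrightarrow> (\<forall>vs. is_cycle V E vs \<longrightarrow> length vs \<ge> 5)"

definition proper_colouring :: "nat \<Rightarrow> 'a set \<Rightarrow> 'a set set \<Rightarrow> ('a \<Rightarrow> nat) \<Rightarrow> bool" where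
  "proper_colouring k V E c \<longleftrightarrow> (\<forall>v\<in>V. c v \<in> {1..k}) \<and> (\<forall>u v. adj E u v \<longrightarrow> c u \<noteq> c v)"

text \<open>A recolouring sequence of proper 4-colourings from \<alpha> to \<beta>; colourings are compared on V only.\<close>
definition recolouring_seq :: "'a set \<Rightarrow> 'a set set \<Rightarrow> ('a \<Rightarrow> nat) \<Rightarrow> ('a \<Rightarrow> nat) \<Rightarrow> ('a \<Rightarrow> nat) list \<Rightarrow> bool" where
  "recolouring_seq V E \<alpha> \<beta> cs \<longleftrightarrow> cs \<noteq> [] \<and>
     (\<forall>c\<in>set cs. proper_colouring 4 V E c) \<and>
     (\<forall>v\<in>V. hd cs v = \<alpha> v \<and> last cs v = \<beta> v) \<and>
     (\<forall>i. i + 1 < length cs \<longrightarrow> card {v\<in>V. (cs ! i) v \<noteq> (cs ! (i + 1)) v} = 1)"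

definition counterexample :: "'a set \<Rightarrow> 'a set set \<Rightarrow> ('a \<Rightarrow> nat) \<Rightarrow> ('a \<Rightarrow> nat) \<Rightarrow> bool" where
  "counterexample V E \<alpha> \<beta> \<longleftrightarrow> graph V E \<and> planar V E \<and> girth_ge5 V E \<and>
     proper_colouring 4 V E \<alpha> \<and> proper_colouring 3 V E \<beta> \<and>
     \<not> (\<exists>cs. recolouring_seq V E \<alpha> \<beta> cs)"

text \<open>Minimality is measured against all counterexamples; since being a counterexample is
  invariant under renaming vertices and every finite graph has an isomorphic copy on nat,
  it suffices to compare with counterexamples whose vertices are natural numbers.\<close>
definition minimal_counterexample :: "'a set \<Rightarrow> 'a set set \<Rightarrow> ('a \<Rightarrow> nat) \<Rightarrow> ('a \<Rightarrow> nat) \<Rightarrow> bool" where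
  "minimal_counterexample V E \<alpha> \<beta> \<longleftrightarrow> counterexample V E \<alpha> \<beta> \<and>
     (\<forall>(W :: nat set) F \<alpha>' \<beta>'. counterexample W F \<alpha>' \<beta>' \<longrightarrow> card V \<le> card W)"

end

theory Submission
  imports Defs
begin

lemma adj_in:
  assumes "graph V E" "adj E u v"
  shows "u \<in> V \<and> v \<in> V \<and> u \<noteq> v"
proof -
  have "{u,v} \<in> E" using assms(2) by (simp add: adj_def)
  then obtain a b where "{u,v} = {a,b}" "a \<noteq> b" "a \<in> V" "b \<in> V"
    using assms(1) unfolding graph_def by blast
  then show ?thesis by (auto simp: doubleton_eq_iff)
qed

lemma proper_agree:
  assumes "graph V E" "proper_colouring k V E c" "\<forall>v\<in>V. c v = d v"
  shows "proper_colouring k V E d"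
  using assms adj_in[OF assms(1)] unfolding proper_colouring_def by metis

definition stp :: "'a set \<Rightarrow> 'a set set \<Rightarrow> ('a \<Rightarrow> nat) \<Rightarrow> ('a \<Rightarrow> nat) \<Rightarrow> bool" where
  "stp V E c d \<longleftrightarrow> proper_colouring 4 V E c \<and> proper_colouring 4 V E d \<and>
     card {v\<in>V. c v \<noteq> d v} \<le> 1"

lemma stp_agree:
  assumes "graph V E" "proper_colouring 4 V E c" "\<forall>v\<in>V. c v = d v"
  shows "stp V E c d"
proof -
  have "{v\<in>V. c v \<noteq> d v} = {}" using assms(3) by auto
  then show ?thesis using assms proper_agree unfolding stp_def by (metis card.empty le0)
qed

lemma rc_to_stp:
  assumes "graph V E" "recolouring_seq V E a b cs"
  shows "(stp V E)\<^sup>*\<^sup>* a b"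
  using assms(2)
proof (induction cs arbitrary: b rule: rev_induct)
  case Nil
  then show ?case by (simp add: recolouring_seq_def)
next
  case (snoc x xs)
  note R = snoc.prems[unfolded recolouring_seq_def]
  have px: "proper_colouring 4 V E x" using R by auto
  have xb: "stp V E x b" using R px stp_agree[OF assms(1)] by auto
  show ?case
  proof (cases "xs = []")
    case True
    then have pa: "proper_colouring 4 V E a" using R px proper_agree[OF assms(1), of 4 x a] by auto
    have "stp V E a x" using R True by (intro stp_agree[OF assms(1) pa]) auto
    then show ?thesis using xb by auto
  next
    case False
    have "recolouring_seq V E a (last xs) xs"
      unfolding recolouring_seq_def
    proof (intro conjI ballI allI impI)
      show "xs \<noteq> []" by fact
      show "c \<in> set xs \<Longrightarrow> proper_colouring 4 V E c" for c using R by auto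
      show "hd xs v = a v" if "v \<in> V" for v using R that False by auto
      show "last xs v = last xs v" for v by simp
      show "card {v \<in> V. (xs ! i) v \<noteq> (xs ! (i + 1)) v} = 1" if "i + 1 < length xs" for i
      proof -
        have "card {v \<in> V. ((xs@[x]) ! i) v \<noteq> ((xs@[x]) ! (i + 1)) v} = 1" using R that by simp
        then show ?thesis using that by (simp add: nth_append)
      qed
    qed
    then have "(stp V E)\<^sup>*\<^sup>* a (last xs)" using snoc.IH by blast
    moreover have "stp V E (last xs) x"
    proof -
      define i where "i = length xs - 1"
      have "i + 1 < length (xs @ [x])" using False by (simp add: i_def)
      then have "card {v \<in> V. ((xs@[x]) ! i) v \<noteq> ((xs@[x]) ! (i + 1)) v} = 1" using R by blast
      moreover have "(xs@[x]) ! i = last xs" using False by (simp add: i_def nth_append last_conv_nth)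
      moreover have "(xs@[x]) ! (i+1) = x" using False by (simp add: i_def nth_append)
      ultimately show ?thesis using R False by (auto simp: stp_def)
    qed
    ultimately show ?thesis using xb by (meson rtranclp.rtrancl_into_rtrancl)
  qed
qed

lemma stp_to_rc:
  assumes "graph V E" "(stp V E)\<^sup>*\<^sup>* a b" "proper_colouring 4 V E a"
  shows "\<exists>cs. recolouring_seq V E a b cs"
  using assms(2)
proof (induction rule: rtranclp_induct)
  case base
  then show ?case using assms(3) by (intro exI[of _ "[a]"]) (auto simp: recolouring_seq_def)
next
  case (step b c)
  then obtain cs where cs: "recolouring_seq V E a b cs" by blast
  note R = cs[unfolded recolouring_seq_def]
  show ?case
  proof (cases "card {v\<in>V. b v \<noteq> c v} = 0")
    case True
    then have "\<forall>v\<in>V. b v = c v" using assms(1) unfolding graph_def by auto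
    then have "recolouring_seq V E a c cs" using R unfolding recolouring_seq_def by auto
    then show ?thesis by blast
  next
    case False
    then have c1: "card {v\<in>V. b v \<noteq> c v} = 1" using step(2) by (auto simp: stp_def)
    have eq: "{v\<in>V. last cs v \<noteq> c v} = {v\<in>V. b v \<noteq> c v}" using R by auto
    have "recolouring_seq V E a c (cs @ [c])"
      unfolding recolouring_seq_def
    proof (intro conjI ballI allI impI)
      show "cs @ [c] \<noteq> []" by simp
      show "d \<in> set (cs @ [c]) \<Longrightarrow> proper_colouring 4 V E d" for d using R step(2) by (auto simp: stp_def)
      show "hd (cs @ [c]) v = a v" if "v \<in> V" for v using R that by auto
      show "last (cs @ [c]) v = c v" for v by simp
      show "card {v \<in> V. ((cs @ [c]) ! i) v \<noteq> ((cs @ [c]) ! (i + 1)) v} = 1" if "i + 1 < length (cs @ [c])" for i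
      proof (cases "i + 1 < length cs")
        case True
        then show ?thesis using R by (auto simp: nth_append)
      next
        case False
        then have "i = length cs - 1" using that by simp
        then have "(cs @ [c]) ! i = last cs" "(cs @ [c]) ! (i+1) = c" using R
          by (auto simp: nth_append last_conv_nth)
        then show ?thesis using eq c1 by simp
      qed
    qed
    then show ?thesis by blast
  qed
qed

lemma stp_proper:
  assumes "(stp V E)\<^sup>*\<^sup>* a b" "proper_colouring 4 V E a"
  shows "proper_colouring 4 V E b"
  using assms by (induction rule: rtranclp_induct) (auto simp: stp_def)


lemma transfer_nat:
  fixes W :: "'a set"
  assumes ce: "counterexample W F a b"
  shows "\<exists>(W'::nat set) F' a' b'. counterexample W' F' a' b' \<and> card W' = card W"
proof -
  note C = ce[unfolded counterexample_def]
  have gr: "graph W F" and pl: "planar W F" and gi: "girth_ge5 W F"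
    and pa: "proper_colouring 4 W F a" and pb: "proper_colouring 3 W F b"
    and nr: "\<not> (\<exists>cs. recolouring_seq W F a b cs)" using C by blast+
  have fin: "finite W" using gr by (simp add: graph_def)
  obtain f :: "'a \<Rightarrow> nat" where inj: "inj_on f W" using finite_imp_inj_to_nat_seg[OF fin] by blast
  define g where "g = inv_into W f"
  have gf: "g (f x) = x" if "x \<in> W" for x using inj that by (simp add: g_def)
  have gW: "g y \<in> W" if "y \<in> f ` W" for y using that by (auto simp: g_def inv_into_into)
  have fg: "f (g y) = y" if "y \<in> f ` W" for y using that by (auto simp: g_def f_inv_into_f)
  have eW: "e \<subseteq> W" if eF: "e \<in> F" for e
  proof -
    obtain u v where "e = {u,v}" "u \<in> W" "v \<in> W" using gr eF unfolding graph_def by meson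
    then show ?thesis by simp
  qed
  have gimg: "g ` (f ` e) = e" if "e \<subseteq> W" for e using that gf by force
  define W' where "W' = f ` W"
  have gen: "{v\<in>W. P (f v)} = g ` {w\<in>W'. P w}" for P
  proof
    show "{v\<in>W. P (f v)} \<subseteq> g ` {w\<in>W'. P w}"
    proof
      fix v assume v: "v \<in> {v\<in>W. P (f v)}"
      then have "f v \<in> {w\<in>W'. P w}" by (simp add: W'_def)
      moreover have "v = g (f v)" using v gf by simp
      ultimately show "v \<in> g ` {w\<in>W'. P w}" by blast
    qed
    show "g ` {w\<in>W'. P w} \<subseteq> {v\<in>W. P (f v)}" using gW fg by (auto simp: W'_def)
  qed
  define F' where "F' = (\<lambda>e. f ` e) ` F"
  define a' where "a' = a \<circ> g"
  define b' where "b' = b \<circ> g"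
  have adjF: "adj F (g x) (g y)" if H: "adj F' x y" for x y
  proof -
    obtain e where e: "e \<in> F" "{x,y} = f ` e" using H unfolding adj_def F'_def by blast
    have "{g x, g y} = g ` (f ` e)" using e(2) by (metis image_empty image_insert)
    also have "\<dots> = e" using gimg eW e(1) by blast
    finally show ?thesis using e by (simp add: adj_def)
  qed
  have adjF': "adj F' (f x) (f y)" if "adj F x y" for x y
    using that unfolding adj_def F'_def by (metis image_empty image_insert image_eqI)
  have adjW': "x \<in> W' \<and> y \<in> W'" if H: "adj F' x y" for x y
  proof -
    obtain e where e: "e \<in> F" "{x,y} = f ` e" using H unfolding adj_def F'_def by blast
    then have "{x,y} \<subseteq> f ` W" using eW[OF e(1)] by (metis image_mono)
    then show ?thesis by (simp add: W'_def)
  qed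
  have graph': "graph W' F'"
    unfolding graph_def
  proof (intro conjI ballI)
    show "finite W'" using fin by (simp add: W'_def)
    fix e' assume "e' \<in> F'"
    then obtain e where e: "e \<in> F" "e' = f ` e" unfolding F'_def by blast
    then obtain u v where "e = {u,v}" "u \<noteq> v" "u \<in> W" "v \<in> W" using gr unfolding graph_def by blast
    then show "\<exists>u v. e' = {u, v} \<and> u \<noteq> v \<and> u \<in> W' \<and> v \<in> W'"
      using e inj unfolding W'_def inj_on_def by (intro exI[of _ "f u"] exI[of _ "f v"]) auto
  qed
  have planar': "planar W' F'"
  proof -
    obtain pos :: "'a \<Rightarrow> complex" and \<gamma> :: "'a set \<Rightarrow> real \<Rightarrow> complex" where P:
      "inj_on pos W"
      "\<forall>e\<in>F. arc (\<gamma> e) \<and> {pathstart (\<gamma> e), pathfinish (\<gamma> e)} = pos ` e \<and>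
                 path_image (\<gamma> e) \<inter> pos ` W = pos ` e"
      "\<forall>e\<in>F. \<forall>e'\<in>F. e \<noteq> e' \<longrightarrow> path_image (\<gamma> e) \<inter> path_image (\<gamma> e') \<subseteq> pos ` (e \<inter> e')"
      using pl unfolding planar_def by blast
    define pos' where "pos' = pos \<circ> g"
    define \<gamma>' where "\<gamma>' = (\<lambda>e'. \<gamma> (g ` e'))"
    have pW: "pos' ` W' = pos ` W" unfolding pos'_def W'_def using gimg[OF order_refl] by (metis image_comp)
    have pe: "pos' ` (f ` e) = pos ` e" if "e \<subseteq> W" for e unfolding pos'_def using gimg[OF that] by (metis image_comp)
    have ge: "\<gamma>' (f ` e) = \<gamma> e" if "e \<subseteq> W" for e unfolding \<gamma>'_def using gimg[OF that] by simp
    have "inj_on pos' W'"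
      unfolding pos'_def W'_def using P(1) gf gW
      by (metis comp_inj_on[OF inj_on_inv_into[OF order_refl]] g_def gimg order_refl)
    moreover have "\<forall>e'\<in>F'. arc (\<gamma>' e') \<and> {pathstart (\<gamma>' e'), pathfinish (\<gamma>' e')} = pos' ` e' \<and>
                 path_image (\<gamma>' e') \<inter> pos' ` W' = pos' ` e'"
    proof
      fix e' assume "e' \<in> F'"
      then obtain e where e: "e \<in> F" "e' = f ` e" unfolding F'_def by blast
      then show "arc (\<gamma>' e') \<and> {pathstart (\<gamma>' e'), pathfinish (\<gamma>' e')} = pos' ` e' \<and>
                 path_image (\<gamma>' e') \<inter> pos' ` W' = pos' ` e'"
        using P(2) pW pe[OF eW[OF e(1)]] ge[OF eW[OF e(1)]] by simp
    qed
    moreover have "\<forall>e1\<in>F'. \<forall>e2\<in>F'. e1 \<noteq> e2 \<longrightarrow> path_image (\<gamma>' e1) \<inter> path_image (\<gamma>' e2) \<subseteq> pos' ` (e1 \<inter> e2)"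
    proof (intro ballI impI)
      fix e1 e2 assume "e1 \<in> F'" "e2 \<in> F'" "e1 \<noteq> e2"
      then obtain d1 d2 where d: "d1 \<in> F" "e1 = f ` d1" "d2 \<in> F" "e2 = f ` d2" unfolding F'_def by blast
      then have "d1 \<noteq> d2" using \<open>e1 \<noteq> e2\<close> by blast
      have "e1 \<inter> e2 = f ` (d1 \<inter> d2)" using d eW inj
        by (metis inj_on_image_Int)
      moreover have "d1 \<inter> d2 \<subseteq> W" using d eW by blast
      ultimately show "path_image (\<gamma>' e1) \<inter> path_image (\<gamma>' e2) \<subseteq> pos' ` (e1 \<inter> e2)"
        using P(3) d \<open>d1 \<noteq> d2\<close> pe ge eW by simp
    qed
    ultimately show ?thesis unfolding planar_def by blast
  qed
  have girth': "girth_ge5 W' F'"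
    unfolding girth_ge5_def
  proof (intro allI impI)
    fix vs assume cy: "is_cycle W' F' vs"
    have "is_cycle W F (map g vs)"
      unfolding is_cycle_def
    proof (intro conjI allI impI)
      show "3 \<le> length (map g vs)" using cy by (simp add: is_cycle_def)
      have "inj_on g (set vs)" unfolding g_def by (rule inj_on_inv_into) (use cy in \<open>auto simp: is_cycle_def W'_def\<close>)
      then show "distinct (map g vs)" using cy by (simp add: is_cycle_def distinct_map)
      show "set (map g vs) \<subseteq> W" using cy gW by (auto simp: is_cycle_def W'_def)
      fix i assume "i < length (map g vs)"
      then show "adj F (map g vs ! i) (map g vs ! ((i + 1) mod length (map g vs)))"
      proof -
        have l: "i < length vs" "Suc i mod length vs < length vs" using \<open>i < length (map g vs)\<close> by (auto intro: mod_less_divisor)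
        then have "adj F' (vs ! i) (vs ! (Suc i mod length vs))" using cy by (simp add: is_cycle_def)
        then show ?thesis using adjF l by simp
      qed
    qed
    then show "5 \<le> length vs" using gi unfolding girth_ge5_def by (metis length_map)
  qed
  have prop': "proper_colouring k W' F' (c \<circ> g)" if "proper_colouring k W F c" for k c
    using that gW adjF unfolding proper_colouring_def W'_def by auto
  have norc: "\<not> (\<exists>cs. recolouring_seq W' F' a' b' cs)"
  proof
    assume "\<exists>cs. recolouring_seq W' F' a' b' cs"
    then obtain cs where R: "recolouring_seq W' F' a' b' cs" by blast
    note R = R[unfolded recolouring_seq_def]
    have "recolouring_seq W F a b (map (\<lambda>c. c \<circ> f) cs)"
      unfolding recolouring_seq_def
    proof (intro conjI ballI allI impI)
      show "map (\<lambda>c. c \<circ> f) cs \<noteq> []" using R by simp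
      fix d assume "d \<in> set (map (\<lambda>c. c \<circ> f) cs)"
      then obtain c where c: "c \<in> set cs" "d = c \<circ> f" by auto
      then have pc: "proper_colouring 4 W' F' c" using R by blast
      show "proper_colouring 4 W F d"
        using pc c adjF' adj_in[OF gr] unfolding proper_colouring_def W'_def by auto
    next
      fix v assume v: "v \<in> W"
      then have "f v \<in> W'" by (simp add: W'_def)
      then show "hd (map (\<lambda>c. c \<circ> f) cs) v = a v" "last (map (\<lambda>c. c \<circ> f) cs) v = b v"
        using R v gf by (auto simp: a'_def b'_def hd_map last_map)
    next
      fix i assume i: "i + 1 < length (map (\<lambda>c. c \<circ> f) cs)"
      let ?S = "{v \<in> W'. (cs ! i) v \<noteq> (cs ! (i + 1)) v}"
      have "card ?S = 1" using R i by simp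
      moreover have "{v \<in> W. (map (\<lambda>c. c \<circ> f) cs ! i) v \<noteq> (map (\<lambda>c. c \<circ> f) cs ! (i + 1)) v}
            = g ` ?S" using i gen by simp
      moreover have "inj_on g ?S" unfolding W'_def g_def by (rule inj_on_inv_into) auto
      ultimately show "card {v \<in> W. (map (\<lambda>c. c \<circ> f) cs ! i) v \<noteq> (map (\<lambda>c. c \<circ> f) cs ! (i + 1)) v} = 1"
        by (simp add: card_image)
    qed
    then show False using nr by blast
  qed
  have "counterexample W' F' a' b'"
    unfolding counterexample_def a'_def b'_def using graph' planar' girth' norc prop'[OF pa] prop'[OF pb]
    unfolding a'_def b'_def by blast
  moreover have "card W' = card W" using inj by (simp add: W'_def card_image)
  ultimately show ?thesis by blast
qed


lemma edge_sub:
  assumes "graph V E" "e \<in> E"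
  shows "e \<subseteq> V"
proof -
  obtain u v where "e = {u,v}" "u \<in> V" "v \<in> V" using assms unfolding graph_def by meson
  then show ?thesis by simp
qed

lemma proper_sub:
  assumes "proper_colouring k V E c" "A \<subseteq> V" "E' \<subseteq> E"
  shows "proper_colouring k A E' c"
  using assms unfolding proper_colouring_def adj_def by blast

lemma proper_34:
  assumes "proper_colouring 3 V E c"
  shows "proper_colouring 4 V E c"
  using assms unfolding proper_colouring_def by auto

lemma sub_ok:
  assumes g: "graph V E" and p: "planar V E" and gi: "girth_ge5 V E"
    and A: "A \<subseteq> V" and E': "E' \<subseteq> E" and eA: "\<forall>e\<in>E'. e \<subseteq> A"
  shows "graph A E' \<and> planar A E' \<and> girth_ge5 A E'"
proof (intro conjI)
  show "graph A E'"
    unfolding graph_def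
  proof (intro conjI ballI)
    show "finite A" using g A finite_subset unfolding graph_def by blast
    fix e assume e: "e \<in> E'"
    then obtain u v where "e = {u,v}" "u \<noteq> v" using g E' unfolding graph_def by blast
    then show "\<exists>u v. e = {u, v} \<and> u \<noteq> v \<and> u \<in> A \<and> v \<in> A" using eA e by blast
  qed
  show "planar A E'"
  proof -
    obtain pos :: "'a \<Rightarrow> complex" and \<gamma> :: "'a set \<Rightarrow> real \<Rightarrow> complex" where P:
      "inj_on pos V"
      "\<forall>e\<in>E. arc (\<gamma> e) \<and> {pathstart (\<gamma> e), pathfinish (\<gamma> e)} = pos ` e \<and>
                 path_image (\<gamma> e) \<inter> pos ` V = pos ` e"
      "\<forall>e\<in>E. \<forall>e'\<in>E. e \<noteq> e' \<longrightarrow> path_image (\<gamma> e) \<inter> path_image (\<gamma> e') \<subseteq> pos ` (e \<inter> e')"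
      using p unfolding planar_def by blast
    have "inj_on pos A" using P(1) A inj_on_subset by blast
    moreover have "\<forall>e\<in>E'. arc (\<gamma> e) \<and> {pathstart (\<gamma> e), pathfinish (\<gamma> e)} = pos ` e \<and>
                 path_image (\<gamma> e) \<inter> pos ` A = pos ` e"
    proof
      fix e assume e: "e \<in> E'"
      then have eE: "e \<in> E" using E' by blast
      have h1: "arc (\<gamma> e)" "{pathstart (\<gamma> e), pathfinish (\<gamma> e)} = pos ` e"
        "path_image (\<gamma> e) \<inter> pos ` V = pos ` e" using P(2) eE by auto
      have "pos ` e \<subseteq> path_image (\<gamma> e)" using h1(2) by (metis pathfinish_in_path_image pathstart_in_path_image insert_subset empty_subsetI)
      moreover have "pos ` e \<subseteq> pos ` A" using eA e by blast
      moreover have "pos ` A \<subseteq> pos ` V" using A by blast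
      ultimately have "path_image (\<gamma> e) \<inter> pos ` A = pos ` e" using h1(3) by blast
      then show "arc (\<gamma> e) \<and> {pathstart (\<gamma> e), pathfinish (\<gamma> e)} = pos ` e \<and>
                 path_image (\<gamma> e) \<inter> pos ` A = pos ` e" using h1 by blast
    qed
    moreover have "\<forall>e\<in>E'. \<forall>e'\<in>E'. e \<noteq> e' \<longrightarrow> path_image (\<gamma> e) \<inter> path_image (\<gamma> e') \<subseteq> pos ` (e \<inter> e')"
      using P(3) E' by blast
    ultimately show ?thesis unfolding planar_def by blast
  qed
  show "girth_ge5 A E'"
    unfolding girth_ge5_def
  proof (intro allI impI)
    fix vs assume "is_cycle A E' vs"
    then have "is_cycle V E vs" using A E' unfolding is_cycle_def adj_def by blast
    then show "5 \<le> length vs" using gi unfolding girth_ge5_def by blast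
  qed
qed

lemma smaller_ok:
  assumes m: "minimal_counterexample V E \<alpha> \<beta>" and A: "A \<subseteq> V" and lt: "card A < card V"
    and E': "E' \<subseteq> E" and eA: "\<forall>e\<in>E'. e \<subseteq> A"
  shows "(stp A E')\<^sup>*\<^sup>* \<alpha> \<beta>"
proof -
  have ce: "counterexample V E \<alpha> \<beta>" using m by (simp add: minimal_counterexample_def)
  have mn: "\<forall>(W :: nat set) F \<alpha>' \<beta>'. counterexample W F \<alpha>' \<beta>' \<longrightarrow> card V \<le> card W"
    using m by (simp add: minimal_counterexample_def)
  note C = ce[unfolded counterexample_def]
  have gr: "graph V E" and pl: "planar V E" and gi: "girth_ge5 V E"
    and pa: "proper_colouring 4 V E \<alpha>" and pb: "proper_colouring 3 V E \<beta>" using C by blast+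
  have s: "graph A E' \<and> planar A E' \<and> girth_ge5 A E'" using sub_ok[OF gr pl gi A E' eA] .
  have "\<not> counterexample A E' \<alpha> \<beta>"
  proof
    assume "counterexample A E' \<alpha> \<beta>"
    then obtain W' :: "nat set" and F' a' b' where "counterexample W' F' a' b'" "card W' = card A"
      using transfer_nat by blast
    then show False using mn lt by fastforce
  qed
  moreover have "proper_colouring 4 A E' \<alpha>" "proper_colouring 3 A E' \<beta>"
    using proper_sub[OF pa A E'] proper_sub[OF pb A E'] by auto
  ultimately obtain cs where "recolouring_seq A E' \<alpha> \<beta> cs" using s unfolding counterexample_def by blast
  then show ?thesis using rc_to_stp s by blast
qed


definition merge :: "'a set \<Rightarrow> ('a \<Rightarrow> nat) \<Rightarrow> ('a \<Rightarrow> nat) \<Rightarrow> 'a \<Rightarrow> nat" where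
  "merge A c h = (\<lambda>x. if x \<in> A then c x else h x)"

lemma merge_proper:
  assumes g: "graph V E" and A: "A \<subseteq> V" and sp: "\<forall>e\<in>E. e \<subseteq> A \<or> e \<subseteq> V - A"
    and pc: "proper_colouring 4 A {e\<in>E. e \<subseteq> A} c"
    and ph: "proper_colouring 4 (V - A) {e\<in>E. e \<subseteq> V - A} h"
  shows "proper_colouring 4 V E (merge A c h)"
  unfolding proper_colouring_def
proof (intro conjI ballI allI impI)
  fix x assume x: "x \<in> V"
  have "\<forall>v\<in>A. c v \<in> {1..4}" "\<forall>v\<in>V - A. h v \<in> {1..4}" using pc ph unfolding proper_colouring_def by blast+
  then show "merge A c h x \<in> {1..4}" using x unfolding merge_def by simp
next
  fix u v assume uv: "adj E u v"
  then have e: "{u,v} \<in> E" by (simp add: adj_def)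
  show "merge A c h u \<noteq> merge A c h v"
  proof (cases "{u,v} \<subseteq> A")
    case True
    then have "adj {e\<in>E. e \<subseteq> A} u v" using e by (simp add: adj_def)
    then have "c u \<noteq> c v" using pc unfolding proper_colouring_def by blast
    then show ?thesis using True unfolding merge_def by simp
  next
    case False
    have "{u,v} \<subseteq> A \<or> {u,v} \<subseteq> V - A" using sp e by (rule bspec)
    then have F: "{u,v} \<subseteq> V - A" using False by (elim disjE) simp_all
    then have "adj {e\<in>E. e \<subseteq> V - A} u v" using e by (simp add: adj_def)
    then have "h u \<noteq> h v" using ph unfolding proper_colouring_def by blast
    then show ?thesis using F unfolding merge_def by simp
  qed
qed

lemma lift_part:
  assumes g: "graph V E" and A: "A \<subseteq> V" and sp: "\<forall>e\<in>E. e \<subseteq> A \<or> e \<subseteq> V - A"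
    and ph: "proper_colouring 4 (V - A) {e\<in>E. e \<subseteq> V - A} h"
    and r: "(stp A {e\<in>E. e \<subseteq> A})\<^sup>*\<^sup>* c d"
  shows "(stp V E)\<^sup>*\<^sup>* (merge A c h) (merge A d h)"
  using r
proof (induction rule: rtranclp_induct)
  case base
  then show ?case by simp
next
  case (step d e)
  have "{x\<in>V. merge A d h x \<noteq> merge A e h x} = {x\<in>A. d x \<noteq> e x}" using A unfolding merge_def by auto
  moreover have "proper_colouring 4 A {e\<in>E. e \<subseteq> A} d" "proper_colouring 4 A {e\<in>E. e \<subseteq> A} e"
    "card {x\<in>A. d x \<noteq> e x} \<le> 1" using step(2) unfolding stp_def by blast+
  ultimately have "stp V E (merge A d h) (merge A e h)"
    using merge_proper[OF g A sp _ ph] unfolding stp_def by presburger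
  with step(3) show ?case by (meson rtranclp.rtrancl_into_rtrancl)
qed

lemma connected_part:
  assumes m: "minimal_counterexample V E \<alpha> \<beta>"
  shows "connected_graph V E"
proof (rule ccontr)
  assume nc: "\<not> connected_graph V E"
  have ce: "counterexample V E \<alpha> \<beta>" using m by (simp add: minimal_counterexample_def)
  note C = ce[unfolded counterexample_def]
  have gr: "graph V E" and pa: "proper_colouring 4 V E \<alpha>" and pb: "proper_colouring 3 V E \<beta>"
    and nr: "\<not> (\<exists>cs. recolouring_seq V E \<alpha> \<beta> cs)" using C by blast+
  have fin: "finite V" using gr by (simp add: graph_def)
  obtain u w where u: "u \<in> V" and w: "w \<in> V" and nuw: "\<not> (adj E)\<^sup>*\<^sup>* u w"
    using nc unfolding connected_graph_def by blast
  define A where "A = {x\<in>V. (adj E)\<^sup>*\<^sup>* u x}"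
  define B where "B = V - A"
  have AV: "A \<subseteq> V" and BV: "B \<subseteq> V" by (auto simp: A_def B_def)
  have uA: "u \<in> A" using u by (simp add: A_def)
  have wB: "w \<in> B" using w nuw by (simp add: A_def B_def)
  have VB: "V - B = A" using AV by (auto simp: B_def)
  have sp: "\<forall>e\<in>E. e \<subseteq> A \<or> e \<subseteq> V - A"
  proof
    fix e assume e: "e \<in> E"
    then obtain x y where xy: "e = {x,y}" "x \<in> V" "y \<in> V" using gr unfolding graph_def by meson
    have "x \<in> A \<longleftrightarrow> y \<in> A"
    proof
      assume "x \<in> A"
      moreover have "adj E x y" using e xy by (simp add: adj_def)
      ultimately show "y \<in> A" using xy unfolding A_def by (auto intro: rtranclp.rtrancl_into_rtrancl)
    next
      assume "y \<in> A"
      moreover have "adj E y x" using e xy by (simp add: adj_def insert_commute)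
      ultimately show "x \<in> A" using xy unfolding A_def by (auto intro: rtranclp.rtrancl_into_rtrancl)
    qed
    then show "e \<subseteq> A \<or> e \<subseteq> V - A" using xy by auto
  qed
  have sp2: "\<forall>e\<in>E. e \<subseteq> B \<or> e \<subseteq> V - B" using sp VB B_def by blast
  have "w \<notin> A" using wB unfolding B_def by simp
  then have "A \<noteq> V" using w by metis
  then have "A \<subset> V" using AV by (rule psubsetI[rotated])
  then have cA: "card A < card V" using fin by (rule psubset_card_mono[rotated])
  have "u \<notin> B" using uA unfolding B_def by simp
  then have "B \<noteq> V" using u by metis
  then have "B \<subset> V" using BV by (rule psubsetI[rotated])
  then have cB: "card B < card V" using fin by (rule psubset_card_mono[rotated])
  have rA: "(stp A {e\<in>E. e \<subseteq> A})\<^sup>*\<^sup>* \<alpha> \<beta>" by (rule smaller_ok[OF m AV cA]) auto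
  have rB: "(stp B {e\<in>E. e \<subseteq> B})\<^sup>*\<^sup>* \<alpha> \<beta>" by (rule smaller_ok[OF m BV cB]) auto
  have phA: "proper_colouring 4 (V - A) {e\<in>E. e \<subseteq> V - A} \<alpha>" by (rule proper_sub[OF pa]) auto
  have phB: "proper_colouring 4 (V - B) {e\<in>E. e \<subseteq> V - B} \<beta>" by (rule proper_sub[OF proper_34[OF pb]]) auto
  have 1: "(stp V E)\<^sup>*\<^sup>* (merge A \<alpha> \<alpha>) (merge A \<beta> \<alpha>)" using lift_part[OF gr AV sp phA rA] .
  have 2: "(stp V E)\<^sup>*\<^sup>* (merge B \<alpha> \<beta>) (merge B \<beta> \<beta>)" using lift_part[OF gr BV sp2 phB rB] .
  have m1: "merge A \<alpha> \<alpha> = \<alpha>" "merge B \<beta> \<beta> = \<beta>" by (auto simp: merge_def)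
  have p1: "proper_colouring 4 V E (merge A \<beta> \<alpha>)" using stp_proper[OF 1] m1 pa by simp
  have "stp V E (merge A \<beta> \<alpha>) (merge B \<alpha> \<beta>)"
    by (rule stp_agree[OF gr p1]) (auto simp: merge_def B_def)
  then have "(stp V E)\<^sup>*\<^sup>* \<alpha> \<beta>" using 1 2 m1
    by (metis (no_types, lifting) rtranclp.rtrancl_into_rtrancl rtranclp_trans)
  then show False using stp_to_rc[OF gr _ pa] nr by blast
qed


lemma upd_proper:
  assumes g: "graph V E" and v: "v \<in> V"
    and pc: "proper_colouring 4 (V - {v}) {e\<in>E. v \<notin> e} c"
    and z: "z \<in> {1..4}" and zn: "\<forall>u. {u,v} \<in> E \<longrightarrow> z \<noteq> c u"
  shows "proper_colouring 4 V E (c(v:=z))"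
  unfolding proper_colouring_def
proof (intro conjI ballI allI impI)
  have c1: "\<forall>w\<in>V - {v}. c w \<in> {1..4}" using pc unfolding proper_colouring_def by blast
  fix x assume "x \<in> V"
  then show "(c(v:=z)) x \<in> {1..4}" using c1 z by (cases "x = v") auto
next
  fix a b assume ab: "adj E a b"
  have c2: "\<forall>a b. adj {e\<in>E. v \<notin> e} a b \<longrightarrow> c a \<noteq> c b" using pc unfolding proper_colouring_def by blast
  have ne: "a \<noteq> b" using adj_in[OF g ab] by simp
  have e: "{a,b} \<in> E" using ab by (simp add: adj_def)
  show "(c(v:=z)) a \<noteq> (c(v:=z)) b"
  proof (cases "a = v")
    case True
    then have "{b,v} \<in> E" using e by (simp add: insert_commute)
    then show ?thesis using zn True ne by auto
  next
    case False
    show ?thesis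
    proof (cases "b = v")
      case True
      then show ?thesis using zn False e by auto
    next
      case F2: False
      then have "adj {e\<in>E. v \<notin> e} a b" using e False by (simp add: adj_def)
      then show ?thesis using c2 False F2 by auto
    qed
  qed
qed

lemma lift_vertex:
  assumes g: "graph V E" and v: "v \<in> V" and dg: "card {u. {u,v} \<in> E} \<le> 2"
    and r: "(stp (V - {v}) {e\<in>E. v \<notin> e})\<^sup>*\<^sup>* c d"
    and pc: "proper_colouring 4 V E (c(v:=x))"
  shows "\<exists>y. (stp V E)\<^sup>*\<^sup>* (c(v:=x)) (d(v:=y)) \<and> proper_colouring 4 V E (d(v:=y))"
  using r
proof (induction rule: rtranclp_induct)
  case base
  then show ?case using pc by blast
next
  case (step d e)
  obtain y where y: "(stp V E)\<^sup>*\<^sup>* (c(v:=x)) (d(v:=y))" "proper_colouring 4 V E (d(v:=y))"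
    using step(3) by blast
  define N where "N = {u. {u,v} \<in> E}"
  define D where "D = {w\<in>V - {v}. d w \<noteq> e w}"
  have fin: "finite V" using g by (simp add: graph_def)
  have NV: "N \<subseteq> V - {v}"
  proof
    fix u assume "u \<in> N"
    then have "adj E u v" by (simp add: N_def adj_def)
    then show "u \<in> V - {v}" using adj_in[OF g] by blast
  qed
  have fN: "finite N" using NV fin finite_subset by blast
  have cN: "card N \<le> 2" using dg by (simp add: N_def)
  have pd: "proper_colouring 4 (V - {v}) {e\<in>E. v \<notin> e} d" and pe: "proper_colouring 4 (V - {v}) {e\<in>E. v \<notin> e} e"
    and cD: "card D \<le> 1" using step(2) unfolding stp_def D_def by blast+
  define S where "S = d ` N \<union> e ` (N \<inter> D)"
  have fS: "finite S" using fN by (simp add: S_def)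
  have "card S \<le> card (d ` N) + card (e ` (N \<inter> D))" unfolding S_def by (rule card_Un_le)
  also have "\<dots> \<le> card N + card (N \<inter> D)" using fN by (intro add_mono card_image_le) auto
  also have "card (N \<inter> D) \<le> card D" using fN by (intro card_mono) (auto simp: D_def fin)
  finally have cS: "card S \<le> 3" using cN cD by linarith
  have "\<not> {1..4::nat} \<subseteq> S"
  proof
    assume "{1..4::nat} \<subseteq> S"
    then have "card {1..4::nat} \<le> card S" using fS by (rule card_mono[rotated])
    then show False using cS by simp
  qed
  then obtain z where z: "z \<in> {1..4::nat}" "z \<notin> S" by blast
  have zd: "\<forall>u. {u,v} \<in> E \<longrightarrow> z \<noteq> d u" using z by (auto simp: S_def N_def)
  have ze: "\<forall>u. {u,v} \<in> E \<longrightarrow> z \<noteq> e u"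
  proof (intro allI impI)
    fix u assume u: "{u,v} \<in> E"
    then have uN: "u \<in> N" by (simp add: N_def)
    show "z \<noteq> e u"
    proof (cases "d u = e u")
      case True
      then show ?thesis using zd u by auto
    next
      case False
      then have "u \<in> N \<inter> D" using uN NV by (auto simp: D_def)
      then have "e u \<in> S" by (auto simp: S_def)
      then show ?thesis using z by auto
    qed
  qed
  have pdz: "proper_colouring 4 V E (d(v:=z))" by (rule upd_proper[OF g v pd z(1) zd])
  have pez: "proper_colouring 4 V E (e(v:=z))" by (rule upd_proper[OF g v pe z(1) ze])
  have s1: "stp V E (d(v:=y)) (d(v:=z))"
  proof -
    have "{w\<in>V. (d(v:=y)) w \<noteq> (d(v:=z)) w} \<subseteq> {v}" by auto
    then have "card {w\<in>V. (d(v:=y)) w \<noteq> (d(v:=z)) w} \<le> card {v}" by (rule card_mono[rotated]) simp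
    then show ?thesis using y(2) pdz unfolding stp_def by simp
  qed
  have s2: "stp V E (d(v:=z)) (e(v:=z))"
  proof -
    have "{w\<in>V. (d(v:=z)) w \<noteq> (e(v:=z)) w} = D" by (auto simp: D_def)
    then show ?thesis using cD pdz pez unfolding stp_def by simp
  qed
  have "(stp V E)\<^sup>*\<^sup>* (c(v:=x)) (e(v:=z))" using y(1) s1 s2
    by (meson rtranclp.rtrancl_into_rtrancl)
  then show ?case using pez by blast
qed

lemma degree_part:
  assumes m: "minimal_counterexample V E \<alpha> \<beta>" and v: "v \<in> V"
  shows "degree E v \<ge> 3"
proof (rule ccontr)
  assume "\<not> degree E v \<ge> 3"
  then have dg: "card {u. {u,v} \<in> E} \<le> 2" by (simp add: degree_def)
  have ce: "counterexample V E \<alpha> \<beta>" using m by (simp add: minimal_counterexample_def)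
  note C = ce[unfolded counterexample_def]
  have gr: "graph V E" and pa: "proper_colouring 4 V E \<alpha>" and pb: "proper_colouring 3 V E \<beta>"
    and nr: "\<not> (\<exists>cs. recolouring_seq V E \<alpha> \<beta> cs)" using C by blast+
  have fin: "finite V" using gr by (simp add: graph_def)
  have cV: "card (V - {v}) < card V" using fin v by (rule card_Diff1_less)
  have r: "(stp (V - {v}) {e\<in>E. v \<notin> e})\<^sup>*\<^sup>* \<alpha> \<beta>"
  proof (rule smaller_ok[OF m _ cV])
    show "V - {v} \<subseteq> V" by blast
    show "{e\<in>E. v \<notin> e} \<subseteq> E" by blast
    show "\<forall>e\<in>{e\<in>E. v \<notin> e}. e \<subseteq> V - {v}" using edge_sub[OF gr] by blast
  qed
  have pa': "proper_colouring 4 V E (\<alpha>(v:=\<alpha> v))" using pa by simp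
  obtain y where y: "(stp V E)\<^sup>*\<^sup>* (\<alpha>(v:=\<alpha> v)) (\<beta>(v:=y))" "proper_colouring 4 V E (\<beta>(v:=y))"
    using lift_vertex[OF gr v dg r pa'] by blast
  have "stp V E (\<beta>(v:=y)) \<beta>"
  proof -
    have "{w\<in>V. (\<beta>(v:=y)) w \<noteq> \<beta> w} \<subseteq> {v}" by auto
    then have "card {w\<in>V. (\<beta>(v:=y)) w \<noteq> \<beta> w} \<le> card {v}" by (rule card_mono[rotated]) simp
    then show ?thesis using y(2) proper_34[OF pb] unfolding stp_def by simp
  qed
  then have "(stp V E)\<^sup>*\<^sup>* \<alpha> \<beta>" using y(1) by (simp add: rtranclp.rtrancl_into_rtrancl)
  then show False using stp_to_rc[OF gr _ pa] nr by blast
qed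

theorem lemma4:
  fixes V :: "'a set" and E :: "'a set set" and \<alpha> \<beta> :: "'a \<Rightarrow> nat"
  assumes "minimal_counterexample V E \<alpha> \<beta>"
  shows "connected_graph V E \<and> (\<forall>v\<in>V. degree E v \<ge> 3)"
  using connected_part[OF assms] degree_part[OF assms] by blast

end
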